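(* Let $\mathcal P$ consist of exactly two propositional variables, let $\mathcal E=\mathcal L_{\mathcal P}^*/\!\equiv$ be the set of consistent formulas modulo logical equivalence, and let $B(\varphi)=\varphi$ for every $\varphi\in\mathcal E$. Let $\nabla$ be an ES basic fusion operator on this epistemic space whose representing basic assignment $\Phi\mapsto\succeq_\Phi$ satisfies the Maximality Condition. Then $\nabla$ does not satisfy (ESF-SD).
   Context: $\mathcal W_{\mathcal P}$ denotes valuations, $[\![\phi]\!]$ models, $\varphi_M$ a formula with models exactly $M$. Agents form a well-ordered set $\mathcal S$; a society is a nonempty finite $N\subseteq\mathcal S$; an $N$-profile is $\Phi:N\to\mathcal E$, $E_i=\Phi(i)$, identified with $E_i$ if $N=\{i\}$; profiles on $\{i_1<\dots<i_n\}$ and $\{j_1<\dots<j_m\}$ are equivalent if $n=m$ and entries coincide position-wise. An ES combination operator maps (profile, $E\in\mathcal E$) to $\nabla(\Phi,E)\in\mathcal E$; it is an ES basic fusion operator if (ESF1) $B(\nabla(\Phi,E))\vdash B(E)$; (ESF2) equivalent profiles and $B(E)\equiv B(E')$ give $B(\nabla(\Phi,E))\equiv B(\nabla(\Phi',E'))$; (ESF3) if $B(E)\equiv B(E')\wedge B(E'')$ then $B(\nabla(\Phi,E'))\wedge B(E'')\vdash B(\nabla(\Phi,E))$; (ESF4) if moreover $B(\nabla(\Phi,E'))\wedge B(E'')\nvdash\bot$ then $B(\nabla(\Phi,E))\vdash B(\nabla(\Phi,E'))\wedge B(E'')$. For such $\nabla$ there is a unique assignment $\Phi\mapsto\succeq_\Phi$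 (total preorders on $\mathcal W_{\mathcal P}$, equal on equivalent profiles) with $[\![B(\nabla(\Phi,E))]\!]=\max([\![B(E)]\!],\succeq_\Phi)$, where $\max(C,\succeq)=\{c\in C:c\succeq x\ \forall x\in C\}$. Maximality Condition: $[\![B(E_i)]\!]=\max(\succeq_{E_i})$ for every agent $i$ and $i$-profile $E_i$. (ESF-SD): for every agent $i$, every three interpretations $w,w',w''$ and every $E_{w,w'},E_{w',w''}$ with $[\![B(E_{w,w'})]\!]=\{w,w'\}$, $[\![B(E_{w',w''})]\!]=\{w',w''\}$, for each of the following four requirements there exists an $i$-profile $E_i$ meeting it: (i) $B(\nabla(E_i,E_{w,w'}))\equiv\varphi_{w,w'}$ and $B(\nabla(E_i,E_{w',w''}))\equiv\varphi_{w',w''}$; (ii) $\equiv\varphi_{w,w'}$ and $\equiv\varphi_{w'}$; (iii) $\equiv\varphi_w$ and $\equiv\varphi_{w',w''}$; (iv) $\equiv\varphi_w$ and $\equiv\varphi_{w'}$. *)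

theory Defs
  imports Main
begin

(* Epistemic space E = consistent formulas modulo equivalence, represented by
   their (nonempty) sets of models; B is the identity, so B(E) is E itself and
   entailment B(E) |- B(E') is inclusion of model sets. *)

type_synonym ('i, 'w) profile = "'i \<Rightarrow> 'w set option"

definition epist :: "'w set \<Rightarrow> bool" where
  "epist E \<longleftrightarrow> E \<noteq> {}"

definition is_profile :: "('i, 'w) profile \<Rightarrow> bool" where
  "is_profile Phi \<longleftrightarrow> finite (dom Phi) \<and> dom Phi \<noteq> {} \<and> (\<forall>E\<in>ran Phi. epist E)"

definition entries :: "('i::linorder, 'w) profile \<Rightarrow> 'w set list" where
  "entries Phi = map (\<lambda>i. the (Phi i)) (sorted_list_of_set (dom Phi))"

definition equiv_profiles :: "('i::linorder, 'w) profile \<Rightarrow> ('i, 'w) profile \<Rightarrow> bool" where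
  "equiv_profiles Phi Psi \<longleftrightarrow> entries Phi = entries Psi"

definition single_profile :: "'i \<Rightarrow> 'w set \<Rightarrow> ('i, 'w) profile" where
  "single_profile i E = [i \<mapsto> E]"

definition ES_combination_operator ::
  "(('i, 'w) profile \<Rightarrow> 'w set \<Rightarrow> 'w set) \<Rightarrow> bool" where
  "ES_combination_operator nabla \<longleftrightarrow>
     (\<forall>Phi E. is_profile Phi \<and> epist E \<longrightarrow> epist (nabla Phi E))"

definition ES_basic_fusion_operator ::
  "(('i::linorder, 'w) profile \<Rightarrow> 'w set \<Rightarrow> 'w set) \<Rightarrow> bool" where
  "ES_basic_fusion_operator nabla \<longleftrightarrow>
     ES_combination_operator nabla \<and>
     \<comment> \<open>ESF1\<close>
     (\<forall>Phi E. is_profile Phi \<and> epist E \<longrightarrow> nabla Phi E \<subseteq> E) \<and>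
     \<comment> \<open>ESF2\<close>
     (\<forall>Phi Phi' E E'. is_profile Phi \<and> is_profile Phi' \<and> epist E \<and> epist E' \<and>
        equiv_profiles Phi Phi' \<and> E = E' \<longrightarrow> nabla Phi E = nabla Phi' E') \<and>
     \<comment> \<open>ESF3\<close>
     (\<forall>Phi E E' E''. is_profile Phi \<and> epist E \<and> epist E' \<and> epist E'' \<and>
        E = E' \<inter> E'' \<longrightarrow> nabla Phi E' \<inter> E'' \<subseteq> nabla Phi E) \<and>
     \<comment> \<open>ESF4\<close>
     (\<forall>Phi E E' E''. is_profile Phi \<and> epist E \<and> epist E' \<and> epist E'' \<and>
        E = E' \<inter> E'' \<and> nabla Phi E' \<inter> E'' \<noteq> {} \<longrightarrow> nabla Phi E \<subseteq> nabla Phi E' \<inter> E'')"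

definition total_preorder :: "('w \<Rightarrow> 'w \<Rightarrow> bool) \<Rightarrow> bool" where
  "total_preorder R \<longleftrightarrow> (\<forall>x y z. R x y \<and> R y z \<longrightarrow> R x z) \<and> (\<forall>x y. R x y \<or> R y x)"

definition maxset :: "'w set \<Rightarrow> ('w \<Rightarrow> 'w \<Rightarrow> bool) \<Rightarrow> 'w set" where
  "maxset C R = {c \<in> C. \<forall>x\<in>C. R c x}"

definition represents ::
  "(('i::linorder, 'w) profile \<Rightarrow> 'w set \<Rightarrow> 'w set) \<Rightarrow> (('i, 'w) profile \<Rightarrow> 'w \<Rightarrow> 'w \<Rightarrow> bool) \<Rightarrow> bool" where
  "represents nabla R \<longleftrightarrow>
     (\<forall>Phi. is_profile Phi \<longrightarrow> total_preorder (R Phi)) \<and>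
     (\<forall>Phi Psi. is_profile Phi \<and> is_profile Psi \<and> equiv_profiles Phi Psi \<longrightarrow> R Phi = R Psi) \<and>
     (\<forall>Phi E. is_profile Phi \<and> epist E \<longrightarrow> nabla Phi E = maxset E (R Phi))"

definition maximality_condition :: "(('i, 'w) profile \<Rightarrow> 'w \<Rightarrow> 'w \<Rightarrow> bool) \<Rightarrow> bool" where
  "maximality_condition R \<longleftrightarrow>
     (\<forall>i E. epist E \<longrightarrow> E = maxset UNIV (R (single_profile i E)))"

definition ESF_SD :: "(('i, 'w) profile \<Rightarrow> 'w set \<Rightarrow> 'w set) \<Rightarrow> bool" where
  "ESF_SD nabla \<longleftrightarrow>
     (\<forall>i w w' w''. w \<noteq> w' \<and> w' \<noteq> w'' \<and> w \<noteq> w'' \<longrightarrow>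
        (\<exists>E. epist E \<and> nabla (single_profile i E) {w, w'} = {w, w'}
                    \<and> nabla (single_profile i E) {w', w''} = {w', w''}) \<and>
        (\<exists>E. epist E \<and> nabla (single_profile i E) {w, w'} = {w, w'}
                    \<and> nabla (single_profile i E) {w', w''} = {w'}) \<and>
        (\<exists>E. epist E \<and> nabla (single_profile i E) {w, w'} = {w}
                    \<and> nabla (single_profile i E) {w', w''} = {w', w''}) \<and>
        (\<exists>E. epist E \<and> nabla (single_profile i E) {w, w'} = {w}
                    \<and> nabla (single_profile i E) {w', w''} = {w'}))"

end

theory Submission
  imports Defs
begin

lemma ms_pair:
  assumes "maxset {x,y} R = {x,y}" shows "R x y \<and> R y x"
proof -
  have "x \<in> maxset {x,y} R" "y \<in> maxset {x,y} R" using assms by auto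
  thus ?thesis unfolding maxset_def by auto
qed

lemma ms_single:
  assumes "x \<noteq> y" "total_preorder R" "maxset {x,y} R = {x}" shows "R x y \<and> \<not> R y x"
proof -
  have "x \<in> maxset {x,y} R" "y \<notin> maxset {x,y} R" using assms by auto
  moreover have "R y y" using assms(2) unfolding total_preorder_def by blast
  ultimately show ?thesis unfolding maxset_def by auto
qed

lemma sub: "E \<noteq> {} \<Longrightarrow> E \<subseteq> S \<Longrightarrow> S = {x,y} \<Longrightarrow> E = {x} \<or> E = {y} \<or> E = {x,y}"
  by auto

lemma key:
  fixes ge :: "'w set \<Rightarrow> 'w \<Rightarrow> 'w \<Rightarrow> bool"
  assumes U: "UNIV = {a,b,c,d}"
    and dist: "a \<noteq> b" "a \<noteq> c" "a \<noteq> d" "b \<noteq> c" "b \<noteq> d" "c \<noteq> d"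
    and tp: "\<And>E. E \<noteq> {} \<Longrightarrow> total_preorder (ge E)"
    and top: "\<And>E x y. E \<noteq> {} \<Longrightarrow> x \<in> E \<Longrightarrow> ge E x y"
    and r1: "\<exists>E. E \<noteq> {} \<and> (ge E c b \<and> \<not> ge E b c) \<and> (ge E b d \<and> \<not> ge E d b)"
    and r2: "\<exists>E. E \<noteq> {} \<and> (ge E c d \<and> \<not> ge E d c) \<and> (ge E d b \<and> ge E b d)"
    and r3: "\<exists>E. E \<noteq> {} \<and> (ge E d a \<and> \<not> ge E a d) \<and> (ge E a b \<and> \<not> ge E b a)"
    and r4: "\<exists>E. E \<noteq> {} \<and> (ge E d b \<and> \<not> ge E b d) \<and> (ge E b a \<and> ge E a b)"
    and r5: "\<exists>E. E \<noteq> {} \<and> (ge E d b \<and> \<not> ge E b d) \<and> (ge E b a \<and> \<not> ge E a b)"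
    and r6: "\<exists>E. E \<noteq> {} \<and> (ge E d b \<and> \<not> ge E b d) \<and> (ge E b c \<and> \<not> ge E c b)"
    and r7: "\<exists>E. E \<noteq> {} \<and> (ge E d c \<and> \<not> ge E c d) \<and> (ge E c b \<and> ge E b c)"
    and r8: "\<exists>E. E \<noteq> {} \<and> (ge E d c \<and> \<not> ge E c d) \<and> (ge E c b \<and> \<not> ge E b c)"
  shows False
proof -
  have tr: "\<And>E x y z. E \<noteq> {} \<Longrightarrow> ge E x y \<Longrightarrow> ge E y z \<Longrightarrow> ge E x z"
    using tp unfolding total_preorder_def by blast
  obtain E3 where e3: "E3 \<noteq> {}" "ge E3 d a" "\<not> ge E3 a d" "ge E3 a b" "\<not> ge E3 b a" using r3 by blast
  obtain E4 where e4: "E4 \<noteq> {}" "ge E4 d b" "\<not> ge E4 b d" "ge E4 b a" "ge E4 a b" using r4 by blast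
  obtain E5 where e5: "E5 \<noteq> {}" "ge E5 d b" "\<not> ge E5 b d" "ge E5 b a" "\<not> ge E5 a b" using r5 by blast
  have "a \<notin> E3" "b \<notin> E3" using e3 top[OF e3(1), of a d] top[OF e3(1), of b a] by blast+
  hence s3: "E3 \<subseteq> {c,d}" using U by auto
  have "a \<notin> E4" "b \<notin> E4" using e4 top[OF e4(1), of a d] tr[OF e4(1), of b a d] top[OF e4(1), of b d] by blast+
  hence s4: "E4 \<subseteq> {c,d}" using U by auto
  have "a \<notin> E5" "b \<notin> E5" using e5 top[OF e5(1), of a b] top[OF e5(1), of b d] by blast+
  hence s5: "E5 \<subseteq> {c,d}" using U by auto
  have g3: "ge E3 d b \<and> \<not> ge E3 b d" using e3 tr[OF e3(1), of d a b] tr[OF e3(1), of a b d] by blast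
  have "E3 \<noteq> E4" "E3 \<noteq> E5" "E4 \<noteq> E5" using e3 e4 e5 by auto
  then have "E3 = {c} \<or> E4 = {c} \<or> E5 = {c}"
    using sub[OF e3(1) s3 refl] sub[OF e4(1) s4 refl] sub[OF e5(1) s5 refl] by metis
  then have gc: "ge {c} d b \<and> \<not> ge {c} b d" using g3 e4 e5 by auto
  obtain E6 where e6: "E6 \<noteq> {}" "ge E6 d b" "\<not> ge E6 b d" "ge E6 b c" "\<not> ge E6 c b" using r6 by blast
  obtain E7 where e7: "E7 \<noteq> {}" "ge E7 d c" "\<not> ge E7 c d" "ge E7 c b" "ge E7 b c" using r7 by blast
  obtain E8 where e8: "E8 \<noteq> {}" "ge E8 d c" "\<not> ge E8 c d" "ge E8 c b" "\<not> ge E8 b c" using r8 by blast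
  have "b \<notin> E6" "c \<notin> E6" using e6 top[OF e6(1), of b d] top[OF e6(1), of c b] by blast+
  hence s6: "E6 \<subseteq> {a,d}" using U by auto
  have "b \<notin> E7" "c \<notin> E7" using e7 top[OF e7(1), of c d] top[OF e7(1), of b d] tr[OF e7(1), of c b d] by blast+
  hence s7: "E7 \<subseteq> {a,d}" using U by auto
  have "b \<notin> E8" "c \<notin> E8" using e8 top[OF e8(1), of c d] top[OF e8(1), of b c] by blast+
  hence s8: "E8 \<subseteq> {a,d}" using U by auto
  have g7: "ge E7 d b \<and> \<not> ge E7 b d" using e7 tr[OF e7(1), of d c b] tr[OF e7(1), of c b d] by blast
  have g8: "ge E8 d b \<and> \<not> ge E8 b d" using e8 tr[OF e8(1), of d c b] tr[OF e8(1), of c b d] by blast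
  have "E6 \<noteq> E7" "E6 \<noteq> E8" "E7 \<noteq> E8" using e6 e7 e8 by auto
  then have "E6 = {a} \<or> E7 = {a} \<or> E8 = {a}"
    using sub[OF e6(1) s6 refl] sub[OF e7(1) s7 refl] sub[OF e8(1) s8 refl] by metis
  then have ga: "ge {a} d b \<and> \<not> ge {a} b d" using e6 g7 g8 by auto
  obtain E1 where e1: "E1 \<noteq> {}" "ge E1 c b" "\<not> ge E1 b c" "ge E1 b d" "\<not> ge E1 d b" using r1 by blast
  obtain E2 where e2: "E2 \<noteq> {}" "ge E2 c d" "\<not> ge E2 d c" "ge E2 d b" "ge E2 b d" using r2 by blast
  have "b \<notin> E1" "d \<notin> E1" using e1 top[OF e1(1), of b c] top[OF e1(1), of d b] by blast+
  hence s1: "E1 \<subseteq> {a,c}" using U by auto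
  have "b \<notin> E2" "d \<notin> E2" using e2 top[OF e2(1), of d c] top[OF e2(1), of b c] tr[OF e2(1), of d b c] by blast+
  hence s2: "E2 \<subseteq> {a,c}" using U by auto
  have "E1 \<noteq> E2" using e1 e2 by auto
  then have "E1 = {a} \<or> E1 = {c} \<or> E2 = {a} \<or> E2 = {c}"
    using sub[OF e1(1) s1 refl] sub[OF e2(1) s2 refl] by metis
  then show False using ga gc e1 e2 by auto
qed

theorem theorem4:
  fixes nabla :: "('i::wellorder, 'p \<Rightarrow> bool) profile \<Rightarrow> ('p \<Rightarrow> bool) set \<Rightarrow> ('p \<Rightarrow> bool) set"
  assumes "finite (UNIV :: 'p set)" and "card (UNIV :: 'p set) = 2"
    and "ES_basic_fusion_operator nabla"
    and "\<exists>R. represents nabla R \<and> maximality_condition R"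
  shows "\<not> ESF_SD nabla"
proof
  assume sd: "ESF_SD nabla"
  obtain R where rep: "represents nabla R" and mc: "maximality_condition R" using assms(4) by blast
  obtain p1 p2 :: 'p where p12: "p1 \<noteq> p2" "UNIV = {p1,p2}" using assms(2) card_2_iff by metis
  define i :: 'i where "i = undefined"
  define ge where "ge E = R (single_profile i E)" for E
  have prof: "E \<noteq> {} \<Longrightarrow> is_profile (single_profile i E)" for E :: "('p\<Rightarrow>bool) set"
    unfolding is_profile_def single_profile_def epist_def by auto
  have tp: "\<And>E. E \<noteq> {} \<Longrightarrow> total_preorder (ge E)"
    using rep prof unfolding represents_def ge_def by blast
  have nab: "\<And>E F. E \<noteq> {} \<Longrightarrow> F \<noteq> {} \<Longrightarrow> nabla (single_profile i E) F = maxset F (ge E)"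
    using rep prof unfolding represents_def ge_def epist_def by blast
  have top: "\<And>(E::('p\<Rightarrow>bool) set) x y. E \<noteq> {} \<Longrightarrow> x \<in> E \<Longrightarrow> ge E x y"
  proof -
    fix E :: "('p\<Rightarrow>bool) set" and x y assume "E \<noteq> {}" "x \<in> E"
    then have "x \<in> maxset UNIV (ge E)" using mc unfolding maximality_condition_def ge_def epist_def by blast
    then show "ge E x y" unfolding maxset_def by auto
  qed
  define a :: "'p \<Rightarrow> bool" where "a = (\<lambda>p. False)"
  define b :: "'p \<Rightarrow> bool" where "b = (\<lambda>p. p = p1)"
  define c :: "'p \<Rightarrow> bool" where "c = (\<lambda>p. p = p2)"
  define d :: "'p \<Rightarrow> bool" where "d = (\<lambda>p. True)"
  have dist: "a \<noteq> b" "a \<noteq> c" "a \<noteq> d" "b \<noteq> c" "b \<noteq> d" "c \<noteq> d"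
    unfolding a_def b_def c_def d_def using p12 by (auto dest: fun_cong[where x=p1] fun_cong[where x=p2])
  have U: "UNIV = {a,b,c,d}"
  proof (rule set_eqI, simp)
    fix f :: "'p \<Rightarrow> bool"
    have fe: "f = (\<lambda>p. if p = p1 then f p1 else f p2)"
      using p12 by (auto intro!: ext)
    show "f = a \<or> f = b \<or> f = c \<or> f = d"
      unfolding a_def b_def c_def d_def
      by (subst fe, cases "f p1"; cases "f p2") (use p12 in \<open>auto intro!: ext\<close>)
  qed
  have iii: "\<exists>E. E \<noteq> {} \<and> (ge E x y \<and> \<not> ge E y x) \<and> (ge E y z \<and> ge E z y)"
    if h: "x \<noteq> y" "y \<noteq> z" "x \<noteq> z" for x y z
  proof -
    have X: "\<exists>E. epist E \<and> nabla (single_profile i E) {x, y} = {x} \<and> nabla (single_profile i E) {y, z} = {y, z}"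
      using sd[unfolded ESF_SD_def, rule_format, OF conjI[OF h(1) conjI[OF h(2) h(3)]]]
      by (rule conjunct1[OF conjunct2[OF conjunct2]])
    obtain E where E: "epist E \<and> nabla (single_profile i E) {x, y} = {x} \<and> nabla (single_profile i E) {y, z} = {y, z}"
      using X by (rule exE)
    have ne: "E \<noteq> {}" using E epist_def by auto
    have m1: "maxset {x,y} (ge E) = {x}" using E nab[OF ne, of "{x,y}"] by simp
    have m2: "maxset {y,z} (ge E) = {y,z}" using E nab[OF ne, of "{y,z}"] by simp
    show ?thesis using ne ms_single[OF h(1) tp[OF ne] m1] ms_pair[OF m2] by blast
  qed
  have iv: "\<exists>E. E \<noteq> {} \<and> (ge E x y \<and> \<not> ge E y x) \<and> (ge E y z \<and> \<not> ge E z y)"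
    if h: "x \<noteq> y" "y \<noteq> z" "x \<noteq> z" for x y z
  proof -
    have X: "\<exists>E. epist E \<and> nabla (single_profile i E) {x, y} = {x} \<and> nabla (single_profile i E) {y, z} = {y}"
      using sd[unfolded ESF_SD_def, rule_format, OF conjI[OF h(1) conjI[OF h(2) h(3)]]]
      by (rule conjunct2[OF conjunct2[OF conjunct2]])
    obtain E where E: "epist E \<and> nabla (single_profile i E) {x, y} = {x} \<and> nabla (single_profile i E) {y, z} = {y}"
      using X by (rule exE)
    have ne: "E \<noteq> {}" using E epist_def by auto
    have m1: "maxset {x,y} (ge E) = {x}" using E nab[OF ne, of "{x,y}"] by simp
    have m2: "maxset {y,z} (ge E) = {y}" using E nab[OF ne, of "{y,z}"] by simp
    show ?thesis using ne ms_single[OF h(1) tp[OF ne] m1] ms_single[OF h(2) tp[OF ne] m2] by blast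
  qed
  show False
    by (rule key[OF U dist tp top iv[of c b d] iii[of c d b] iv[of d a b] iii[of d b a]
          iv[of d b a] iv[of d b c] iii[of d c b] iv[of d c b]])
       (use dist in auto)
qed

end
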